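(* Let $X',X''$ be a disjoint cover of an index set $X$, $\Pi:=\Pi X$, $\Pi':=\Pi X'$, $\Pi'':=\Pi X''$, so $\Pi=\Pi'\times\Pi''$. Let $\mu$ assign to every subset $A$ of $\Pi$, of $\Pi'$ or of $\Pi''$ a subset $\mu(A)\subseteq A$, and define: $B\subseteq A$ is big iff $\mu(A)\subseteq B\subseteq A$. For $\Sigma\subseteq\Pi$ write $\Sigma':=\Sigma\upharpoonright X'$, $\Sigma'':=\Sigma\upharpoonright X''$. Consider the conditions (each universally quantified over all sets of the indicated kinds): (S*1) for $\Sigma'\subseteq\Pi'$, $\Sigma''\subseteq\Pi''$, $\Delta\subseteq\Sigma'\times\Sigma''$: $\Delta\subseteq\Sigma'\times\Sigma''$ is big iff there is $\Gamma'\times\Gamma''\subseteq\Delta$ with $\Gamma'\subseteq\Sigma'$ and $\Gamma''\subseteq\Sigma''$ big; (S*2) for $\Gamma\subseteq\Sigma\subseteq\Pi$: if $\Gamma\subseteq\Sigma$ is big then $\Gamma\upharpoonright X'\subseteq\Sigma\upharpoonright X'$ is big; (S*3) for $A\subseteq\Sigma\subseteq\Pi$: if $A\subseteq\Sigma$ is big then there is a big $B\subseteq\Pi'\times\Sigma''$ with $B\upharpoonright X''\subseteq A\upharpoonright X''$; ($\mu$*1) for $\Sigma'\subseteq\Pi'$, $\Sigma''\subseteq\Pi''$: $\mu(\Sigma'\times\Sigma'')=\mu(\Sigma')\times\mu(\Sigma'')$; ($\mu$*2) for $\Sigma\subseteq\Pi$ and $\Gamma$: if $\mu(\Sigma)\subseteq\Gamma$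 then $\mu(\Sigma\upharpoonright X')\subseteq\Gamma\upharpoonright X'$; ($\mu$*3) for $\Sigma\subseteq\Pi$: $\mu(\Pi'\times\Sigma'')\upharpoonright X''\subseteq\mu(\Sigma)\upharpoonright X''$. Then (S*$i$) is equivalent to ($\mu$*$i$) for $i=1,2,3$.
   Context: $\Pi X$ denotes the product of the value sets over the indices in $X$; for a set $\Sigma$ of sequences and $Y\subseteq X$, $\Sigma\upharpoonright Y$ is the set of restrictions of its elements to $Y$. *)

theory Defs
  imports "HOL-Library.FuncSet"
begin

text \<open>Sequences over an index set Y with value sets V are the extensional functions
  in PiE Y V (this is Pi Y).  Restriction of a set of sequences to Y:\<close>
definition restr_set :: "('i \<Rightarrow> 'v) set \<Rightarrow> 'i set \<Rightarrow> ('i \<Rightarrow> 'v) set" where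
  "restr_set S Y = (\<lambda>f. restrict f Y) ` S"

text \<open>Product of a set of X'-sequences and a set of X''-sequences, as a set of
  sequences on X' union X'' (identification Pi = Pi' x Pi'').\<close>
definition seq_prod :: "'i set \<Rightarrow> ('i \<Rightarrow> 'v) set \<Rightarrow> ('i \<Rightarrow> 'v) set \<Rightarrow> ('i \<Rightarrow> 'v) set" where
  "seq_prod X1 S1 S2 = {(\<lambda>x. if x \<in> X1 then f x else g x) | f g. f \<in> S1 \<and> g \<in> S2}"

definition big :: "(('i \<Rightarrow> 'v) set \<Rightarrow> ('i \<Rightarrow> 'v) set) \<Rightarrow> ('i \<Rightarrow> 'v) set \<Rightarrow> ('i \<Rightarrow> 'v) set \<Rightarrow> bool" where
  "big \<mu> B A \<longleftrightarrow> \<mu> A \<subseteq> B \<and> B \<subseteq> A"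

end

theory Submission
  imports Defs
begin

lemma seq_prod_PiE:
  assumes "X = X1 \<union> X2" "S1 \<subseteq> PiE X1 V" "S2 \<subseteq> PiE X2 V"
  shows "seq_prod X1 S1 S2 \<subseteq> PiE X V"
proof
  fix h assume "h \<in> seq_prod X1 S1 S2"
  then obtain f g where h: "h = (\<lambda>x. if x \<in> X1 then f x else g x)" "f \<in> S1" "g \<in> S2"
    unfolding seq_prod_def by blast
  then have f: "f \<in> PiE X1 V" and g: "g \<in> PiE X2 V" using assms by auto
  show "h \<in> PiE X V" unfolding h(1) using f g assms(1)
    by (auto simp: PiE_def Pi_def extensional_def)
qed

lemma seq_prod_mono:
  "G1 \<subseteq> S1 \<Longrightarrow> G2 \<subseteq> S2 \<Longrightarrow> seq_prod X1 G1 G2 \<subseteq> seq_prod X1 S1 S2"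
  unfolding seq_prod_def by blast

lemma restr_PiE:
  assumes "S \<subseteq> PiE X V" "X2 \<subseteq> X"
  shows "restr_set S X2 \<subseteq> PiE X2 V"
  using assms unfolding restr_set_def by (auto simp: PiE_def Pi_def subset_iff)

lemma restr_mono: "A \<subseteq> B \<Longrightarrow> restr_set A Y \<subseteq> restr_set B Y"
  unfolding restr_set_def by blast

theorem fact4p4:
  fixes X X1 X2 :: "'i set" and V :: "'i \<Rightarrow> 'v set"
    and \<mu> :: "('i \<Rightarrow> 'v) set \<Rightarrow> ('i \<Rightarrow> 'v) set"
  assumes cover: "X = X1 \<union> X2" and disj: "X1 \<inter> X2 = {}"
    and mu_sub: "\<And>A. A \<subseteq> PiE X V \<or> A \<subseteq> PiE X1 V \<or> A \<subseteq> PiE X2 V \<Longrightarrow> \<mu> A \<subseteq> A"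
  shows
   "((\<forall>S1 S2 D. S1 \<subseteq> PiE X1 V \<longrightarrow> S2 \<subseteq> PiE X2 V \<longrightarrow> D \<subseteq> seq_prod X1 S1 S2 \<longrightarrow>
        (big \<mu> D (seq_prod X1 S1 S2) \<longleftrightarrow>
          (\<exists>G1 G2. seq_prod X1 G1 G2 \<subseteq> D \<and> big \<mu> G1 S1 \<and> big \<mu> G2 S2)))
     \<longleftrightarrow>
     (\<forall>S1 S2. S1 \<subseteq> PiE X1 V \<longrightarrow> S2 \<subseteq> PiE X2 V \<longrightarrow>
        \<mu> (seq_prod X1 S1 S2) = seq_prod X1 (\<mu> S1) (\<mu> S2)))
  \<and> ((\<forall>S G. S \<subseteq> PiE X V \<longrightarrow> G \<subseteq> S \<longrightarrow>
        big \<mu> G S \<longrightarrow> big \<mu> (restr_set G X1) (restr_set S X1))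
     \<longleftrightarrow>
     (\<forall>S G. S \<subseteq> PiE X V \<longrightarrow> \<mu> S \<subseteq> G \<longrightarrow>
        \<mu> (restr_set S X1) \<subseteq> restr_set G X1))
  \<and> ((\<forall>S A. S \<subseteq> PiE X V \<longrightarrow> A \<subseteq> S \<longrightarrow> big \<mu> A S \<longrightarrow>
        (\<exists>B. big \<mu> B (seq_prod X1 (PiE X1 V) (restr_set S X2)) \<and>
             restr_set B X2 \<subseteq> restr_set A X2))
     \<longleftrightarrow>
     (\<forall>S. S \<subseteq> PiE X V \<longrightarrow>
        restr_set (\<mu> (seq_prod X1 (PiE X1 V) (restr_set S X2))) X2 \<subseteq> restr_set (\<mu> S) X2))"
proof (intro conjI)
  have PP: "\<And>S1 S2. S1 \<subseteq> PiE X1 V \<Longrightarrow> S2 \<subseteq> PiE X2 V \<Longrightarrow> \<mu> (seq_prod X1 S1 S2) \<subseteq> seq_prod X1 S1 S2"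
    by (rule mu_sub, rule disjI1, rule seq_prod_PiE[OF cover])
  have M1: "\<And>S1. S1 \<subseteq> PiE X1 V \<Longrightarrow> \<mu> S1 \<subseteq> S1" by (rule mu_sub, rule disjI2, rule disjI1)
  have M2: "\<And>S2. S2 \<subseteq> PiE X2 V \<Longrightarrow> \<mu> S2 \<subseteq> S2" by (rule mu_sub, rule disjI2, rule disjI2)
  show "(\<forall>S1 S2 D. S1 \<subseteq> PiE X1 V \<longrightarrow> S2 \<subseteq> PiE X2 V \<longrightarrow> D \<subseteq> seq_prod X1 S1 S2 \<longrightarrow>
        (big \<mu> D (seq_prod X1 S1 S2) \<longleftrightarrow>
          (\<exists>G1 G2. seq_prod X1 G1 G2 \<subseteq> D \<and> big \<mu> G1 S1 \<and> big \<mu> G2 S2)))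
     \<longleftrightarrow>
     (\<forall>S1 S2. S1 \<subseteq> PiE X1 V \<longrightarrow> S2 \<subseteq> PiE X2 V \<longrightarrow>
        \<mu> (seq_prod X1 S1 S2) = seq_prod X1 (\<mu> S1) (\<mu> S2))"
  proof
    assume H: "\<forall>S1 S2 D. S1 \<subseteq> PiE X1 V \<longrightarrow> S2 \<subseteq> PiE X2 V \<longrightarrow> D \<subseteq> seq_prod X1 S1 S2 \<longrightarrow>
        (big \<mu> D (seq_prod X1 S1 S2) \<longleftrightarrow>
          (\<exists>G1 G2. seq_prod X1 G1 G2 \<subseteq> D \<and> big \<mu> G1 S1 \<and> big \<mu> G2 S2))"
    show "\<forall>S1 S2. S1 \<subseteq> PiE X1 V \<longrightarrow> S2 \<subseteq> PiE X2 V \<longrightarrow>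
        \<mu> (seq_prod X1 S1 S2) = seq_prod X1 (\<mu> S1) (\<mu> S2)"
    proof (intro allI impI)
      fix S1 S2 assume s1: "S1 \<subseteq> PiE X1 V" and s2: "S2 \<subseteq> PiE X2 V"
      have sub: "seq_prod X1 (\<mu> S1) (\<mu> S2) \<subseteq> seq_prod X1 S1 S2"
        using seq_prod_mono M1[OF s1] M2[OF s2] by blast
      have a: "big \<mu> (seq_prod X1 (\<mu> S1) (\<mu> S2)) (seq_prod X1 S1 S2)"
      proof (rule H[rule_format, OF s1 s2 sub, THEN iffD2])
        show "\<exists>G1 G2. seq_prod X1 G1 G2 \<subseteq> seq_prod X1 (\<mu> S1) (\<mu> S2) \<and> big \<mu> G1 S1 \<and> big \<mu> G2 S2"
          using M1[OF s1] M2[OF s2] unfolding big_def by blast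
      qed
      have b: "\<exists>G1 G2. seq_prod X1 G1 G2 \<subseteq> \<mu> (seq_prod X1 S1 S2) \<and> big \<mu> G1 S1 \<and> big \<mu> G2 S2"
      proof (rule H[rule_format, OF s1 s2 PP[OF s1 s2], THEN iffD1])
        show "big \<mu> (\<mu> (seq_prod X1 S1 S2)) (seq_prod X1 S1 S2)"
          using PP[OF s1 s2] unfolding big_def by blast
      qed
      then obtain G1 G2 where "seq_prod X1 G1 G2 \<subseteq> \<mu> (seq_prod X1 S1 S2)" "\<mu> S1 \<subseteq> G1" "\<mu> S2 \<subseteq> G2"
        unfolding big_def by blast
      then have "seq_prod X1 (\<mu> S1) (\<mu> S2) \<subseteq> \<mu> (seq_prod X1 S1 S2)"
        using seq_prod_mono by blast
      then show "\<mu> (seq_prod X1 S1 S2) = seq_prod X1 (\<mu> S1) (\<mu> S2)"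
        using a unfolding big_def by blast
    qed
  next
    assume H: "\<forall>S1 S2. S1 \<subseteq> PiE X1 V \<longrightarrow> S2 \<subseteq> PiE X2 V \<longrightarrow>
        \<mu> (seq_prod X1 S1 S2) = seq_prod X1 (\<mu> S1) (\<mu> S2)"
    show "\<forall>S1 S2 D. S1 \<subseteq> PiE X1 V \<longrightarrow> S2 \<subseteq> PiE X2 V \<longrightarrow> D \<subseteq> seq_prod X1 S1 S2 \<longrightarrow>
        (big \<mu> D (seq_prod X1 S1 S2) \<longleftrightarrow>
          (\<exists>G1 G2. seq_prod X1 G1 G2 \<subseteq> D \<and> big \<mu> G1 S1 \<and> big \<mu> G2 S2))"
    proof (intro allI impI iffI)
      fix S1 S2 D assume s1: "S1 \<subseteq> PiE X1 V" and s2: "S2 \<subseteq> PiE X2 V" and d: "D \<subseteq> seq_prod X1 S1 S2"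
      {
        assume "big \<mu> D (seq_prod X1 S1 S2)"
        then show "\<exists>G1 G2. seq_prod X1 G1 G2 \<subseteq> D \<and> big \<mu> G1 S1 \<and> big \<mu> G2 S2"
          using H[rule_format, OF s1 s2] M1[OF s1] M2[OF s2] unfolding big_def by (intro exI[of _ "\<mu> S1"] exI[of _ "\<mu> S2"]) auto
      next
        assume "\<exists>G1 G2. seq_prod X1 G1 G2 \<subseteq> D \<and> big \<mu> G1 S1 \<and> big \<mu> G2 S2"
        then obtain G1 G2 where "seq_prod X1 G1 G2 \<subseteq> D" "\<mu> S1 \<subseteq> G1" "\<mu> S2 \<subseteq> G2"
          unfolding big_def by blast
        then have "seq_prod X1 (\<mu> S1) (\<mu> S2) \<subseteq> D" using seq_prod_mono by blast
        then show "big \<mu> D (seq_prod X1 S1 S2)"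
          using H[rule_format, OF s1 s2] d unfolding big_def by auto
      }
    qed
  qed
next
  show "(\<forall>S G. S \<subseteq> PiE X V \<longrightarrow> G \<subseteq> S \<longrightarrow>
        big \<mu> G S \<longrightarrow> big \<mu> (restr_set G X1) (restr_set S X1))
     \<longleftrightarrow>
     (\<forall>S G. S \<subseteq> PiE X V \<longrightarrow> \<mu> S \<subseteq> G \<longrightarrow>
        \<mu> (restr_set S X1) \<subseteq> restr_set G X1)"
  proof
    assume H: "\<forall>S G. S \<subseteq> PiE X V \<longrightarrow> G \<subseteq> S \<longrightarrow>
        big \<mu> G S \<longrightarrow> big \<mu> (restr_set G X1) (restr_set S X1)"
    show "\<forall>S G. S \<subseteq> PiE X V \<longrightarrow> \<mu> S \<subseteq> G \<longrightarrow>
        \<mu> (restr_set S X1) \<subseteq> restr_set G X1"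
    proof (intro allI impI)
      fix S G assume s: "S \<subseteq> PiE X V" and g: "\<mu> S \<subseteq> G"
      have "\<mu> S \<subseteq> S" using mu_sub[OF disjI1[OF s]] .
      then have "big \<mu> (G \<inter> S) S" using g unfolding big_def by blast
      then have "big \<mu> (restr_set (G \<inter> S) X1) (restr_set S X1)"
        using H[rule_format, OF s Int_lower2] by blast
      then have "\<mu> (restr_set S X1) \<subseteq> restr_set (G \<inter> S) X1"
        unfolding big_def by (rule conjunct1)
      then show "\<mu> (restr_set S X1) \<subseteq> restr_set G X1"
        using restr_mono[of "G \<inter> S" G X1] by blast
    qed
  next
    assume H: "\<forall>S G. S \<subseteq> PiE X V \<longrightarrow> \<mu> S \<subseteq> G \<longrightarrow>
        \<mu> (restr_set S X1) \<subseteq> restr_set G X1"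
    show "\<forall>S G. S \<subseteq> PiE X V \<longrightarrow> G \<subseteq> S \<longrightarrow>
        big \<mu> G S \<longrightarrow> big \<mu> (restr_set G X1) (restr_set S X1)"
    proof (intro allI impI)
      fix S G assume s: "S \<subseteq> PiE X V" and "G \<subseteq> S" and b: "big \<mu> G S"
      have "\<mu> S \<subseteq> G" using b unfolding big_def by (rule conjunct1)
      then have "\<mu> (restr_set S X1) \<subseteq> restr_set G X1" using H[rule_format, OF s] by blast
      moreover have "restr_set G X1 \<subseteq> restr_set S X1" using restr_mono[OF \<open>G \<subseteq> S\<close>] .
      ultimately show "big \<mu> (restr_set G X1) (restr_set S X1)" unfolding big_def by blast
    qed
  qed
next
  show "(\<forall>S A. S \<subseteq> PiE X V \<longrightarrow> A \<subseteq> S \<longrightarrow> big \<mu> A S \<longrightarrow>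
        (\<exists>B. big \<mu> B (seq_prod X1 (PiE X1 V) (restr_set S X2)) \<and>
             restr_set B X2 \<subseteq> restr_set A X2))
     \<longleftrightarrow>
     (\<forall>S. S \<subseteq> PiE X V \<longrightarrow>
        restr_set (\<mu> (seq_prod X1 (PiE X1 V) (restr_set S X2))) X2 \<subseteq> restr_set (\<mu> S) X2)"
  proof
    assume H: "\<forall>S A. S \<subseteq> PiE X V \<longrightarrow> A \<subseteq> S \<longrightarrow> big \<mu> A S \<longrightarrow>
        (\<exists>B. big \<mu> B (seq_prod X1 (PiE X1 V) (restr_set S X2)) \<and>
             restr_set B X2 \<subseteq> restr_set A X2)"
    show "\<forall>S. S \<subseteq> PiE X V \<longrightarrow>
        restr_set (\<mu> (seq_prod X1 (PiE X1 V) (restr_set S X2))) X2 \<subseteq> restr_set (\<mu> S) X2"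
    proof (intro allI impI)
      fix S assume s: "S \<subseteq> PiE X V"
      have m: "\<mu> S \<subseteq> S" using mu_sub[OF disjI1[OF s]] .
      then have "big \<mu> (\<mu> S) S" unfolding big_def by blast
      then obtain B where "big \<mu> B (seq_prod X1 (PiE X1 V) (restr_set S X2))"
          "restr_set B X2 \<subseteq> restr_set (\<mu> S) X2"
        using H[rule_format, OF s m] by blast
      then show "restr_set (\<mu> (seq_prod X1 (PiE X1 V) (restr_set S X2))) X2 \<subseteq> restr_set (\<mu> S) X2"
        using restr_mono unfolding big_def by blast
    qed
  next
    assume H: "\<forall>S. S \<subseteq> PiE X V \<longrightarrow>
        restr_set (\<mu> (seq_prod X1 (PiE X1 V) (restr_set S X2))) X2 \<subseteq> restr_set (\<mu> S) X2"
    show "\<forall>S A. S \<subseteq> PiE X V \<longrightarrow> A \<subseteq> S \<longrightarrow> big \<mu> A S \<longrightarrow>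
        (\<exists>B. big \<mu> B (seq_prod X1 (PiE X1 V) (restr_set S X2)) \<and>
             restr_set B X2 \<subseteq> restr_set A X2)"
    proof (intro allI impI)
      fix S A assume s: "S \<subseteq> PiE X V" and "A \<subseteq> S" and b: "big \<mu> A S"
      have r: "restr_set S X2 \<subseteq> PiE X2 V" using restr_PiE[OF s] cover by (simp add: Un_upper2)
      have p: "\<mu> (seq_prod X1 (PiE X1 V) (restr_set S X2)) \<subseteq> seq_prod X1 (PiE X1 V) (restr_set S X2)"
        by (rule mu_sub, rule disjI1, rule seq_prod_PiE[OF cover subset_refl r])
      show "\<exists>B. big \<mu> B (seq_prod X1 (PiE X1 V) (restr_set S X2)) \<and>
             restr_set B X2 \<subseteq> restr_set A X2"
      proof (intro exI conjI)
        show "big \<mu> (\<mu> (seq_prod X1 (PiE X1 V) (restr_set S X2))) (seq_prod X1 (PiE X1 V) (restr_set S X2))"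
          using p unfolding big_def by blast
        show "restr_set (\<mu> (seq_prod X1 (PiE X1 V) (restr_set S X2))) X2 \<subseteq> restr_set A X2"
          using H[rule_format, OF s] restr_mono[of "\<mu> S" A X2] b unfolding big_def by blast
      qed
    qed
  qed
qed

end
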